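(* Let $D_n$, colored towers and bottoms be as in the context. For all integers $n,m,r\ge 0$ there is a bijection $$((\mathcal{T}^s,\mathcal{B}^w),(m,r),D_n)\simeq ((\mathcal{T}^s,\mathcal{T}^w),(m,r),D_{n-r}).$$
   Context: A Dyck path of length $2n$ is a lattice path from $(0,0)$ to $(2n,0)$ with steps $U=(1,1)$ and $D=(1,-1)$ never going below the $x$-axis. An elevated Dyck path is a path $U\bar pD$ with $\bar p$ a Dyck path; $D_n$ denotes the set of elevated Dyck paths of length $2n+2$. For a path $p$ (a word in $U,D$), a tower is an occurrence of a factor $t=U^iD^i$ ($i\ge1$) that cannot be extended to an occurrence of $UtD$; equivalently, each peak $UD$ determines exactly one tower, the maximal $U^iD^i$ centered at it. Towers are colored as follows: Step 1: color every tower whose first step is immediately preceded by a $U$-step; Step 2: color every tower whose first step immediately follows the last step of a tower left uncolored after Step 1; a tower beginning at the first step of $p$ is also colored. $\mathcal{T}(p)$ is the set of colored towers and $\mathcal{T}_2(p)\subseteq\mathcal{T}(p)$ those of height $i\ge2$. The bottom of a tower in $\mathcal{T}_2(p)$ is its first $U$-step. $((\mathcal{T}^s,\mathcal{B}^w),(m,r),D_n)$ is the set of triples $(p,S,R)$ with $p\in D_n$, $S\subseteq\mathcal{T}(p)$, $|S|=m$, $R\subseteq S\cap\mathcal{T}_2(p)$, $|R|=r$ (paths with $m$ colored towers labeled $s$, among which exactly $r$ have their bottom labeled $w$). $((\mathcal{T}^s,\mathcal{T}^w),(m,r),D_n)$ is the set of triples $(p,S,R)$ with $p\in D_n$, $S\subseteq\mathcal{T}(p)$,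 $|S|=m$, $R\subseteq S$, $|R|=r$. $A\simeq B$ means there is a bijection between $A$ and $B$ (both sets empty if the index of $D$ is negative). *)

theory Defs
  imports Main
begin

text \<open>Paths are words over {U,D}, encoded as bool lists: True = U, False = D.
  Positions are 0-based.  A tower occurrence is encoded as (s, i): it starts at
  position s and is the factor U^i D^i occupying positions s .. s+2i-1.\<close>

type_synonym path = "bool list"

definition height :: "path \<Rightarrow> int" where
  "height w = (\<Sum>x\<leftarrow>w. if x then 1 else -1)"

definition dyck :: "path \<Rightarrow> bool" where
  "dyck p \<longleftrightarrow> (\<forall>k\<le>length p. height (take k p) \<ge> 0) \<and> height p = 0"

definition elevated :: "path \<Rightarrow> bool" where
  "elevated p \<longleftrightarrow> (\<exists>q. dyck q \<and> p = True # q @ [False])"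

definition Dn :: "int \<Rightarrow> path set" where
  "Dn k = {p. k \<ge> 0 \<and> elevated p \<and> length p = 2 * nat k + 2}"

definition occ :: "path \<Rightarrow> nat \<Rightarrow> nat \<Rightarrow> bool" where
  "occ p s i \<longleftrightarrow> i \<ge> 1 \<and> s + 2 * i \<le> length p \<and>
     (\<forall>j<i. p ! (s + j) = True) \<and> (\<forall>j<i. p ! (s + i + j) = False)"

text \<open>Towers: occurrences that cannot be extended to an occurrence of U t D.\<close>
definition towers :: "path \<Rightarrow> (nat \<times> nat) set" where
  "towers p = {(s, i). occ p s i \<and>
     \<not> (s > 0 \<and> s + 2 * i < length p \<and> p ! (s - 1) = True \<and> p ! (s + 2 * i) = False)}"

definition colored1 :: "path \<Rightarrow> (nat \<times> nat) set" where
  "colored1 p = {(s, i) \<in> towers p. s > 0 \<and> p ! (s - 1) = True}"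

text \<open>Colored towers: Step 1, Step 2 (immediately following the last step of a tower
  left uncolored after Step 1), and a tower beginning at the first step of p.\<close>
definition colored :: "path \<Rightarrow> (nat \<times> nat) set" where
  "colored p = colored1 p \<union>
     {(s, i) \<in> towers p. \<exists>(s', i') \<in> towers p - colored1 p. s' + 2 * i' = s} \<union>
     {(s, i) \<in> towers p. s = 0}"

definition colored2 :: "path \<Rightarrow> (nat \<times> nat) set" where
  "colored2 p = {(s, i) \<in> colored p. i \<ge> 2}"

text \<open>((T^s, B^w), (m, r), D_k): a tower in R stands for its bottom being labeled w.\<close>
definition TsBw :: "nat \<Rightarrow> nat \<Rightarrow> int \<Rightarrow> (path \<times> (nat \<times> nat) set \<times> (nat \<times> nat) set) set" where
  "TsBw m r k = {(p, S, R). p \<in> Dn k \<and> S \<subseteq> colored p \<and> card S = m \<and>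
      R \<subseteq> S \<inter> colored2 p \<and> card R = r}"

definition TsTw :: "nat \<Rightarrow> nat \<Rightarrow> int \<Rightarrow> (path \<times> (nat \<times> nat) set \<times> (nat \<times> nat) set) set" where
  "TsTw m r k = {(p, S, R). p \<in> Dn k \<and> S \<subseteq> colored p \<and> card S = m \<and>
      R \<subseteq> S \<and> card R = r}"

end

theory Submission
  imports Defs
begin


lemma occ_unique:
  assumes "occ p s k" "occ p s k'" shows "k = k'"
proof (rule ccontr)
  assume "k \<noteq> k'"
  then consider "k < k'" | "k' < k" by linarith
  then show False
  proof cases
    case 1
    have "p ! (s + k + 0) = False" using assms(1) unfolding occ_def by auto
    moreover have "p ! (s + k) = True" using assms(2) 1 unfolding occ_def by auto
    ultimately show False by simp
  next
    case 2
    have "p ! (s + k' + 0) = False" using assms(2) unfolding occ_def by auto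
    moreover have "p ! (s + k') = True" using assms(1) 2 unfolding occ_def by auto
    ultimately show False by simp
  qed
qed

lemma tower_pos:
  assumes a: "(a,i) \<in> towers p" and tt: "(s,k) \<in> towers p" and ne: "s \<noteq> a"
  shows "s + 2*k \<le> a \<or> a + 2*i \<le> s"
proof (rule ccontr)
  assume H: "\<not> (s + 2*k \<le> a \<or> a + 2*i \<le> s)"
  have t: "occ p s k" and nt: "\<not> (s > 0 \<and> s + 2 * k < length p \<and> p ! (s - 1) = True \<and> p ! (s + 2 * k) = False)"
    using tt unfolding towers_def by auto
  have oa: "occ p a i" and na: "\<not> (a > 0 \<and> a + 2 * i < length p \<and> p ! (a - 1) = True \<and> p ! (a + 2 * i) = False)"
    using a unfolding towers_def by auto
  have Ua: "\<And>x. a \<le> x \<Longrightarrow> x < a + i \<Longrightarrow> p ! x = True" using oa unfolding occ_def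
    by (metis add_diff_inverse_nat add_less_cancel_left not_le)
  have Da: "\<And>x. a + i \<le> x \<Longrightarrow> x < a + 2*i \<Longrightarrow> p ! x = False" using oa unfolding occ_def
    by (metis add_diff_inverse_nat add_less_cancel_left not_le mult_2 add.assoc)
  have Us: "\<And>x. s \<le> x \<Longrightarrow> x < s + k \<Longrightarrow> p ! x = True" using t unfolding occ_def
    by (metis add_diff_inverse_nat add_less_cancel_left not_le)
  have Ds: "\<And>x. s + k \<le> x \<Longrightarrow> x < s + 2*k \<Longrightarrow> p ! x = False" using t unfolding occ_def
    by (metis add_diff_inverse_nat add_less_cancel_left not_le mult_2 add.assoc)
  have i1: "i \<ge> 1" and k1: "k \<ge> 1" and la: "a + 2*i \<le> length p" and ls: "s + 2*k \<le> length p"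
    using oa t unfolding occ_def by auto
  show False
  proof (cases "s < a")
    case True
    have "\<not> (s + k \<le> a)" using Ds[of a] Ua[of a] H True i1 by auto
    hence "s + k = a + i"
    proof -
      assume h: "\<not> (s + k \<le> a)"
      have "\<not> s + k < a + i" using Ds[of "s+k"] Ua[of "s+k"] h k1 by auto
      moreover have "\<not> s + k > a + i" using Us[of "a+i"] Da[of "a+i"] True i1 by auto
      ultimately show ?thesis by linarith
    qed
    hence "a > 0 \<and> a + 2 * i < length p \<and> p ! (a - 1) = True \<and> p ! (a + 2 * i) = False"
      using Us[of "a-1"] Ds[of "a+2*i"] True i1 k1 ls by auto
    with na show False by blast
  next
    case False
    hence sa: "s > a" using ne by auto
    have "\<not> a + i \<le> s" using Da[of s] Us[of s] H k1 by auto
    hence "s < a + i" by linarith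
    hence sk: "s + k = a + i"
    proof -
      assume h: "s < a + i"
      have "\<not> s + k < a + i" using Ds[of "s+k"] Ua[of "s+k"] h sa k1 by auto
      moreover have "\<not> s + k > a + i" using Us[of "a+i"] Da[of "a+i"] h i1 by auto
      ultimately show ?thesis by linarith
    qed
    have "s > 0 \<and> s + 2 * k < length p \<and> p ! (s - 1) = True \<and> p ! (s + 2 * k) = False"
      using Ua[of "s-1"] Da[of "s+2*k"] sa sk H la by auto
    with nt show False by blast
  qed
qed

definition rep :: "path \<Rightarrow> nat \<Rightarrow> nat \<Rightarrow> nat \<Rightarrow> path" where
  "rep p a i j = take a p @ replicate j True @ replicate j False @ drop (a + 2*i) p"

definition sig :: "nat \<Rightarrow> nat \<Rightarrow> nat \<Rightarrow> nat \<Rightarrow> nat" where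
  "sig a i j x = (if x \<le> a then x else x + 2*j - 2*i)"

definition hh :: "nat \<Rightarrow> nat \<Rightarrow> nat \<Rightarrow> nat \<times> nat \<Rightarrow> nat \<times> nat" where
  "hh a i j t = (sig a i j (fst t), if fst t = a then j else snd t)"

lemma rep_len: "a + 2*i \<le> length p \<Longrightarrow> length (rep p a i j) = length p + 2*j - 2*i"
  unfolding rep_def by auto

lemma rep_nth1: "a + 2*i \<le> length p \<Longrightarrow> x < a \<Longrightarrow> rep p a i j ! x = p ! x"
  unfolding rep_def by (auto simp: nth_append)

lemma rep_nth2: "a + 2*i \<le> length p \<Longrightarrow> a \<le> x \<Longrightarrow> x < a + j \<Longrightarrow> rep p a i j ! x = True"
  unfolding rep_def by (auto simp: nth_append)

lemma rep_nth3: "a + 2*i \<le> length p \<Longrightarrow> a + j \<le> x \<Longrightarrow> x < a + 2*j \<Longrightarrow> rep p a i j ! x = False"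
  unfolding rep_def by (auto simp: nth_append)

lemma rep_nth4: "a + 2*i \<le> length p \<Longrightarrow> a + 2*i \<le> y \<Longrightarrow> y < length p \<Longrightarrow> rep p a i j ! (y + 2*j - 2*i) = p ! y"
proof -
  assume h: "a + 2*i \<le> length p" "a + 2*i \<le> y" "y < length p"
  have "y + 2*j - 2*i = a + 2*j + (y - (a + 2*i))" using h by auto
  moreover have "rep p a i j ! (a + 2*j + (y - (a + 2*i))) = p ! y"
    unfolding rep_def using h by (auto simp: nth_append min_def)
  ultimately show ?thesis by simp
qed

lemma rep_rep: "a + 2*i \<le> length p \<Longrightarrow> rep (rep p a i j) a j i = rep p a i i"
  unfolding rep_def by auto

lemma rep_id: "occ p a i \<Longrightarrow> rep p a i i = p"
proof -
  assume o: "occ p a i"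
  hence l: "a + 2*i \<le> length p" unfolding occ_def by auto
  show ?thesis
  proof (rule nth_equalityI)
    show "length (rep p a i i) = length p" using rep_len[OF l] by simp
    fix x assume "x < length (rep p a i i)"
    hence x: "x < length p" using rep_len[OF l] by simp
    consider "x < a" | "a \<le> x \<and> x < a + i" | "a + i \<le> x \<and> x < a + 2*i" | "a + 2*i \<le> x" by linarith
    then show "rep p a i i ! x = p ! x"
    proof cases
      case 1 then show ?thesis using rep_nth1[OF l] by auto
    next
      case 2
      then obtain d where "x = a + d" "d < i" by (metis add_diff_inverse_nat add_less_cancel_left not_le)
      then show ?thesis using rep_nth2[OF l] o unfolding occ_def by auto
    next
      case 3
      then obtain d where "x = a + i + d" "d < i" by (metis add_diff_inverse_nat add_less_cancel_left not_le mult_2 add.assoc)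
      then show ?thesis using rep_nth3[OF l] o unfolding occ_def by auto
    next
      case 4 then show ?thesis using rep_nth4[OF l 4 x, of i] by simp
    qed
  qed
qed

lemma towersI:
  assumes "k \<ge> 1" "s + 2*k \<le> length q" "\<And>d. d < k \<Longrightarrow> q ! (s + d) = True"
    "\<And>d. d < k \<Longrightarrow> q ! (s + k + d) = False"
    "s > 0 \<Longrightarrow> s + 2*k < length q \<Longrightarrow> q ! (s - 1) = True \<Longrightarrow> q ! (s + 2*k) = True"
  shows "(s,k) \<in> towers q"
  using assms unfolding towers_def occ_def by auto

lemma towersD:
  assumes "(s,k) \<in> towers q"
  shows "k \<ge> 1" "s + 2*k \<le> length q" "\<And>d. d < k \<Longrightarrow> q ! (s + d) = True"
    "\<And>d. d < k \<Longrightarrow> q ! (s + k + d) = False"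
    "s > 0 \<Longrightarrow> s + 2*k < length q \<Longrightarrow> q ! (s - 1) = True \<Longrightarrow> q ! (s + 2*k) = True"
  using assms unfolding towers_def occ_def by auto

lemma rep_tower:
  assumes ta: "(a,i) \<in> towers p" and j: "j \<ge> 1" and t: "(s,k) \<in> towers p"
  shows "hh a i j (s,k) \<in> towers (rep p a i j)"
proof -
  note A = towersD[OF ta]
  note T = towersD[OF t]
  have l: "a + 2*i \<le> length p" using A by auto
  note R1 = rep_nth1[OF l, of _ j] and R2 = rep_nth2[OF l, of _ j] and R3 = rep_nth3[OF l, of j]
    and R4 = rep_nth4[OF l, of _ j]
  have len: "length (rep p a i j) = length p + 2*j - 2*i" using rep_len[OF l] .
  have pa: "p ! a = True" using A(3)[of 0] A(1) by auto
  have "a + i + (i - 1) = a + 2*i - 1" using A(1) by auto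
  hence pa1: "p ! (a + 2*i - 1) = False" using A(4)[of "i - 1"] A(1) by auto
  consider "s < a" | "s = a" | "s > a" by linarith
  then show ?thesis
  proof cases
    case 1
    have le: "s + 2*k \<le> a" using tower_pos[OF ta t] 1 by auto
    have hh: "hh a i j (s,k) = (s,k)" using 1 unfolding hh_def sig_def by auto
    show ?thesis unfolding hh
    proof (rule towersI)
      show "1 \<le> k" using T by auto
      show "s + 2*k \<le> length (rep p a i j)" using le len l j by auto
      fix d assume "d < k" thus "rep p a i j ! (s + d) = True" using T(3) R1 le by auto
    next
      fix d assume "d < k" thus "rep p a i j ! (s + k + d) = False" using T(4) R1 le by auto
    next
      assume h: "0 < s" "s + 2 * k < length (rep p a i j)" "rep p a i j ! (s - 1) = True"
      have "p ! (s - 1) = True" using h R1[of "s-1"] 1 by auto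
      moreover have "s + 2*k < length p" using le l A(1) by auto
      ultimately have "p ! (s + 2*k) = True" using T(5) h by auto
      thus "rep p a i j ! (s + 2*k) = True"
        using R1[of "s+2*k"] le pa R2[of a] j by (cases "s + 2*k = a") auto
    qed
  next
    case 2
    have ki: "k = i" using occ_unique ta t 2 unfolding towers_def by blast
    have hh: "hh a i j (s,k) = (a,j)" using 2 unfolding hh_def sig_def by auto
    show ?thesis unfolding hh
    proof (rule towersI)
      show "1 \<le> j" using j .
      show "a + 2*j \<le> length (rep p a i j)" using len l by auto
      fix d assume "d < j" thus "rep p a i j ! (a + d) = True" using R2 by auto
    next
      fix d assume "d < j" thus "rep p a i j ! (a + j + d) = False" using R3 by auto
    next
      assume h: "0 < a" "a + 2 * j < length (rep p a i j)" "rep p a i j ! (a - 1) = True"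
      have "p ! (a - 1) = True" using h R1[of "a-1"] by auto
      moreover have "a + 2*i < length p" using h len l by auto
      ultimately have "p ! (a + 2*i) = True" using A(5) h by auto
      thus "rep p a i j ! (a + 2*j) = True" using R4[of "a + 2*i"] \<open>a + 2*i < length p\<close> by auto
    qed
  next
    case 3
    have ge: "a + 2*i \<le> s" using tower_pos[OF ta t] 3 by auto
    have hh: "hh a i j (s,k) = (s + 2*j - 2*i,k)" using 3 unfolding hh_def sig_def by auto
    have e: "\<And>x. s + x + 2*j - 2*i = (s + 2*j - 2*i) + x" using ge by auto
    show ?thesis unfolding hh
    proof (rule towersI)
      show "1 \<le> k" using T by auto
      show "s + 2*j - 2*i + 2*k \<le> length (rep p a i j)" using len T(2) ge by auto
      fix d assume d: "d < k"
      have "rep p a i j ! (s + d + 2*j - 2*i) = p ! (s + d)" using R4[of "s+d"] ge T(2) d by auto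
      thus "rep p a i j ! (s + 2*j - 2*i + d) = True" using T(3)[OF d] e by metis
    next
      fix d assume d: "d < k"
      have "rep p a i j ! (s + k + d + 2*j - 2*i) = p ! (s + k + d)" using R4[of "s+k+d"] ge T(2) d by auto
      moreover have "s + k + d + 2*j - 2*i = s + 2*j - 2*i + k + d" using ge by auto
      ultimately show "rep p a i j ! (s + 2*j - 2*i + k + d) = False" using T(4)[OF d] by metis
    next
      assume h: "0 < s + 2*j - 2*i" "s + 2*j - 2*i + 2 * k < length (rep p a i j)"
        "rep p a i j ! (s + 2*j - 2*i - 1) = True"
      have "p ! (s - 1) = True"
      proof (cases "s = a + 2*i")
        case True
        hence "s + 2*j - 2*i - 1 = a + j + (j - 1)" using j by auto
        hence "rep p a i j ! (s + 2*j - 2*i - 1) = False" using R3 j by auto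
        with h show ?thesis by auto
      next
        case False
        hence "rep p a i j ! (s - 1 + 2*j - 2*i) = p ! (s - 1)" using R4[of "s-1"] ge T(2) T(1) by auto
        moreover have "s - 1 + 2*j - 2*i = s + 2*j - 2*i - 1" using ge False by auto
        ultimately show ?thesis using h by auto
      qed
      moreover have "s + 2*k < length p" using h len ge by auto
      ultimately have "p ! (s + 2*k) = True" using T(5) 3 by auto
      moreover have "rep p a i j ! (s + 2*k + 2*j - 2*i) = p ! (s + 2*k)" using R4[of "s+2*k"] ge \<open>s + 2*k < length p\<close> by auto
      moreover have "s + 2*k + 2*j - 2*i = s + 2*j - 2*i + 2*k" using ge by auto
      ultimately show "rep p a i j ! (s + 2*j - 2*i + 2*k) = True" by metis
    qed
  qed
qed

lemma hh_inv:
  assumes ta: "(a,i) \<in> towers p" and t: "t \<in> towers p" and j: "j \<ge> 1"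
  shows "hh a j i (hh a i j t) = t"
proof -
  obtain s k where tk: "t = (s,k)" by force
  consider "s < a" | "s = a" | "a + 2*i \<le> s" using tower_pos[OF ta t[unfolded tk]] by linarith
  then show ?thesis
  proof cases
    case 2
    hence "k = i" using occ_unique ta t tk unfolding towers_def by blast
    thus ?thesis using 2 tk unfolding hh_def sig_def by auto
  next
    case 3
    have "i \<ge> 1" using towersD[OF ta] by auto
    thus ?thesis using 3 tk j unfolding hh_def sig_def by auto
  qed (auto simp: tk hh_def sig_def)
qed

lemma rep_towers:
  assumes ta: "(a,i) \<in> towers p" and j: "j \<ge> 1"
  shows "towers (rep p a i j) = hh a i j ` towers p"
    and "(a,j) \<in> towers (rep p a i j)"
    and "rep (rep p a i j) a j i = p"
proof -
  have i: "i \<ge> 1" and l: "a + 2*i \<le> length p" using towersD[OF ta] by auto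
  have o: "occ p a i" using ta unfolding towers_def by auto
  show aj: "(a,j) \<in> towers (rep p a i j)" using rep_tower[OF ta j ta] unfolding hh_def sig_def by auto
  show rr: "rep (rep p a i j) a j i = p" using rep_rep[OF l] rep_id[OF o] by simp
  show "towers (rep p a i j) = hh a i j ` towers p"
  proof
    show "hh a i j ` towers p \<subseteq> towers (rep p a i j)" using rep_tower[OF ta j] by auto
    show "towers (rep p a i j) \<subseteq> hh a i j ` towers p"
    proof
      fix t assume t: "t \<in> towers (rep p a i j)"
      have "hh a j i t \<in> towers p" using rep_tower[OF aj i, of "fst t" "snd t"] t rr by simp
      moreover have "t = hh a i j (hh a j i t)" using hh_inv[OF aj t i] by simp
      ultimately show "t \<in> hh a i j ` towers p" by blast
    qed
  qed
qed

lemma hh_inj: "(a,i) \<in> towers p \<Longrightarrow> j \<ge> 1 \<Longrightarrow> inj_on (hh a i j) (towers p)"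
  by (metis hh_inv inj_onI)

lemma colored_iff: "t \<in> colored q \<longleftrightarrow> t \<in> towers q \<and>
   (t \<in> colored1 q \<or> (\<exists>t'\<in>towers q - colored1 q. fst t' + 2*snd t' = fst t) \<or> fst t = 0)"
  unfolding colored_def colored1_def by (cases t) force

lemma colored1_iff: "t \<in> colored1 q \<longleftrightarrow> t \<in> towers q \<and> fst t > 0 \<and> q ! (fst t - 1) = True"
  unfolding colored1_def by (cases t) force

lemma colored_sub: "colored q \<subseteq> towers q"
  using colored_iff by blast

lemma colored1_sub: "colored1 q \<subseteq> towers q"
  using colored1_iff by blast

lemma tower_pos2:
  assumes ta: "(a,i) \<in> towers p" and t: "t \<in> towers p"
  shows "fst t \<le> a \<or> a + 2*i \<le> fst t"
    and "fst t + 2*snd t \<le> a \<or> a + 2*i \<le> fst t + 2*snd t"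
proof -
  obtain s k where tk: "t = (s,k)" by force
  have k: "(s = a \<longrightarrow> k = i)" using occ_unique ta t tk unfolding towers_def by blast
  have "s + 2*k \<le> a \<or> a + 2*i \<le> s \<or> s = a" using tower_pos[OF ta t[unfolded tk]] by blast
  thus "fst t \<le> a \<or> a + 2*i \<le> fst t" "fst t + 2*snd t \<le> a \<or> a + 2*i \<le> fst t + 2*snd t"
    using tk k by auto
qed

lemma sig_inj:
  assumes "j \<ge> 1" "i \<ge> 1" "x \<le> a \<or> a + 2*i \<le> x" "y \<le> a \<or> a + 2*i \<le> y" "sig a i j x = sig a i j y"
  shows "x = y"
  using assms unfolding sig_def by (auto split: if_splits)

lemma hh_end:
  assumes ta: "(a,i) \<in> towers p" and t: "t \<in> towers p"
  shows "fst (hh a i j t) + 2*snd (hh a i j t) = sig a i j (fst t + 2*snd t)"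
proof -
  obtain s k where tk: "t = (s,k)" by force
  have k: "(s = a \<longrightarrow> k = i)" using occ_unique ta t tk unfolding towers_def by blast
  have "s + 2*k \<le> a \<or> a + 2*i \<le> s \<or> s = a" using tower_pos[OF ta t[unfolded tk]] by blast
  moreover have "i \<ge> 1" "k \<ge> 1" using towersD[OF ta] towersD[OF t[unfolded tk]] by auto
  ultimately show ?thesis using tk k unfolding hh_def sig_def by auto
qed

context
  fixes p :: path and a i j :: nat
  assumes ta: "(a,i) \<in> towers p" and j: "j \<ge> 1"
begin

lemma hh_c1:
  assumes t: "t \<in> towers p"
  shows "hh a i j t \<in> colored1 (rep p a i j) \<longleftrightarrow> t \<in> colored1 p"
proof -
  obtain s k where tk: "t = (s,k)" by force
  note A = towersD[OF ta]
  have l: "a + 2*i \<le> length p" using A by auto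
  have "a + i + (i - 1) = a + 2*i - 1" using A(1) by auto
  hence pa1: "p ! (a + 2*i - 1) = False" using A(4)[of "i - 1"] A(1) by auto
  have T: "s + 2*k \<le> length p" "k \<ge> 1" using towersD[OF t[unfolded tk]] by auto
  have ht: "hh a i j t \<in> towers (rep p a i j)" using rep_towers(1)[OF ta j] t by auto
  have pos: "s \<le> a \<or> a + 2*i \<le> s" using tower_pos2(1)[OF ta t] tk by auto
  have "fst (hh a i j t) > 0 \<longleftrightarrow> s > 0" using pos A(1) j tk unfolding hh_def sig_def by auto
  moreover have "s > 0 \<Longrightarrow> rep p a i j ! (fst (hh a i j t) - 1) = p ! (s - 1)"
  proof -
    assume s0: "s > 0"
    consider "s \<le> a" | "s = a + 2*i" | "a + 2*i < s" using pos by linarith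
    then show ?thesis
    proof cases
      case 1 thus ?thesis using rep_nth1[OF l, of "s-1" j] s0 tk unfolding hh_def sig_def by auto
    next
      case 2
      hence "fst (hh a i j t) - 1 = a + j + (j - 1)" using tk j A(1) unfolding hh_def sig_def by auto
      hence "rep p a i j ! (fst (hh a i j t) - 1) = False" using rep_nth3[OF l, of j] j by auto
      thus ?thesis using pa1 2 by auto
    next
      case 3
      have "rep p a i j ! (s - 1 + 2*j - 2*i) = p ! (s - 1)" using rep_nth4[OF l, of "s-1" j] 3 T by auto
      moreover have "s - 1 + 2*j - 2*i = fst (hh a i j t) - 1" using 3 tk A(1) unfolding hh_def sig_def by auto
      ultimately show ?thesis by simp
    qed
  qed
  ultimately show ?thesis using ht t tk unfolding colored1_iff by auto
qed

lemma hh_col: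
  assumes t: "t \<in> towers p"
  shows "hh a i j t \<in> colored (rep p a i j) \<longleftrightarrow> t \<in> colored p"
proof -
  have i: "i \<ge> 1" using towersD[OF ta] by auto
  have TP: "towers (rep p a i j) = hh a i j ` towers p" using rep_towers(1)[OF ta j] .
  have ht: "hh a i j t \<in> towers (rep p a i j)" using TP t by auto
  have z: "fst (hh a i j t) = 0 \<longleftrightarrow> fst t = 0" using tower_pos2(1)[OF ta t] i j unfolding hh_def sig_def by auto
  have m: "(\<exists>t'\<in>towers (rep p a i j) - colored1 (rep p a i j). fst t' + 2*snd t' = fst (hh a i j t))
     \<longleftrightarrow> (\<exists>t'\<in>towers p - colored1 p. fst t' + 2*snd t' = fst t)"
  proof
    assume "\<exists>t'\<in>towers (rep p a i j) - colored1 (rep p a i j). fst t' + 2*snd t' = fst (hh a i j t)"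
    then obtain u where u: "u \<in> towers p" "hh a i j u \<notin> colored1 (rep p a i j)"
      "fst (hh a i j u) + 2*snd (hh a i j u) = fst (hh a i j t)" using TP by auto
    have "u \<notin> colored1 p" using u hh_c1 by auto
    moreover have "sig a i j (fst u + 2*snd u) = sig a i j (fst t)" using u(3) hh_end[OF ta u(1)] unfolding hh_def by auto
    hence "fst u + 2*snd u = fst t" using sig_inj[OF j i] tower_pos2[OF ta u(1)] tower_pos2[OF ta t] by blast
    ultimately show "\<exists>t'\<in>towers p - colored1 p. fst t' + 2*snd t' = fst t" using u by blast
  next
    assume "\<exists>t'\<in>towers p - colored1 p. fst t' + 2*snd t' = fst t"
    then obtain u where u: "u \<in> towers p" "u \<notin> colored1 p" "fst u + 2*snd u = fst t" by blast
    have "hh a i j u \<notin> colored1 (rep p a i j)" using u hh_c1 by auto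
    moreover have "fst (hh a i j u) + 2*snd (hh a i j u) = fst (hh a i j t)"
      using hh_end[OF ta u(1)] u(3) unfolding hh_def by auto
    ultimately show "\<exists>t'\<in>towers (rep p a i j) - colored1 (rep p a i j). fst t' + 2*snd t' = fst (hh a i j t)"
      using u TP by blast
  qed
  show ?thesis unfolding colored_iff[of "hh a i j t"] colored_iff[of t] using ht t z m hh_c1[OF t] by simp
qed

lemma rep_colored: "colored (rep p a i j) = hh a i j ` colored p"
proof
  show "hh a i j ` colored p \<subseteq> colored (rep p a i j)" using hh_col colored_sub by blast
  show "colored (rep p a i j) \<subseteq> hh a i j ` colored p"
  proof
    fix u assume u: "u \<in> colored (rep p a i j)"
    then obtain t where "t \<in> towers p" "u = hh a i j t" using colored_sub rep_towers(1)[OF ta j] by blast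
    thus "u \<in> hh a i j ` colored p" using hh_col u by blast
  qed
qed

end

lemma height_append[simp]: "height (xs @ ys) = height xs + height ys"
  unfolding height_def by simp

lemma height_Cons[simp]: "height (x # xs) = (if x then 1 else -1) + height xs"
  unfolding height_def by simp

lemma height_Nil[simp]: "height [] = 0"
  unfolding height_def by simp

lemma height_rep[simp]: "height (replicate n b) = (if b then int n else - int n)"
  by (induction n) auto

lemma take_elev: "k \<le> length q \<Longrightarrow> take (Suc k) (True # q @ [False]) = True # take k q"
  by auto

lemma elevated_iff: "elevated p \<longleftrightarrow> length p \<ge> 2 \<and> height p = 0 \<and>
   (\<forall>k. 0 < k \<and> k < length p \<longrightarrow> height (take k p) > 0)"
proof
  assume "elevated p"
  then obtain q where q: "dyck q" "p = True # q @ [False]" unfolding elevated_def by auto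
  have "\<forall>k. 0 < k \<and> k < length p \<longrightarrow> height (take k p) > 0"
  proof (intro allI impI)
    fix k assume k: "0 < k \<and> k < length p"
    then obtain d where d: "k = Suc d" "d \<le> length q" using q(2) by (cases k) auto
    have "height (take d q) \<ge> 0" using q(1) d unfolding dyck_def by auto
    thus "height (take k p) > 0" using take_elev[OF d(2)] d q(2) by simp
  qed
  thus "length p \<ge> 2 \<and> height p = 0 \<and> (\<forall>k. 0 < k \<and> k < length p \<longrightarrow> height (take k p) > 0)"
    using q unfolding dyck_def by auto
next
  assume h: "length p \<ge> 2 \<and> height p = 0 \<and> (\<forall>k. 0 < k \<and> k < length p \<longrightarrow> height (take k p) > 0)"
  obtain x y q where p: "p = x # q @ [y]" using h
    by (metis One_nat_def Suc_1 Suc_le_length_iff append_butlast_last_id le_Suc_eq length_0_conv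
        length_butlast list.size(3) not_less_eq_eq numeral_le_one_iff semiring_norm(70) zero_less_Suc)
  have x: "x = True" using h[THEN conjunct2, THEN conjunct2, rule_format, of 1] p by (auto split: if_splits)
  have "height (take (Suc (length q)) p) > 0" using h p by auto
  moreover have "take (Suc (length q)) p = x # q" using p by auto
  ultimately have y: "y = False" using h p by (auto split: if_splits)
  have "dyck q" unfolding dyck_def
  proof (intro conjI allI impI)
    fix k assume k: "k \<le> length q"
    have "0 < Suc k \<and> Suc k < length p" using p k by simp
    hence "height (take (Suc k) p) > 0" using h by blast
    moreover have e: "take (Suc k) p = True # take k q" using take_elev[OF k] p x y by simp
    ultimately show "height (take k q) \<ge> 0" by simp
  next
    show "height q = 0" using h p x y by simp
  qed
  thus "elevated p" unfolding elevated_def using p x y by auto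
qed

lemma height_MM: "0 < d \<Longrightarrow> d < 2*j \<Longrightarrow> height (take d (replicate j True @ replicate j False)) > 0"
proof -
  assume d: "0 < d" "d < 2*j"
  have "take d (replicate j True @ replicate j False) = replicate (min d j) True @ replicate (d - j) False"
    using d by (simp add: take_append min_def)
  show ?thesis
  proof (cases "d \<le> j")
    case True thus ?thesis using d \<open>take d _ = _\<close> by (simp add: min_def)
  next
    case False
    hence "d - j < j" using d by linarith
    thus ?thesis using False \<open>take d _ = _\<close> by (simp add: min_def)
  qed
qed

lemma rep_elev:
  assumes el: "elevated p" and ta: "(a,i) \<in> towers p" and j: "j \<ge> 1"
  shows "elevated (rep p a i j)"
proof -
  note E = el[unfolded elevated_iff]
  have o: "occ p a i" using ta unfolding towers_def by auto
  have l: "a + 2*i \<le> length p" and i: "i \<ge> 1" using towersD[OF ta] by auto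
  define A where "A = take a p"
  define B where "B = drop (a + 2*i) p"
  define M where "M = replicate j True @ replicate j False"
  have la: "length A = a" using A_def l by auto
  have pp: "p = A @ (replicate i True @ replicate i False) @ B" using rep_id[OF o] unfolding rep_def A_def B_def by simp
  have pr: "rep p a i j = A @ M @ B" unfolding rep_def A_def B_def M_def by simp
  have hA: "height A \<ge> 0"
  proof (cases "a = 0")
    case True thus ?thesis using A_def by simp
  next
    case False
    hence "0 < a \<and> a < length p" using l i by auto
    hence "height (take a p) > 0" using E by blast
    thus ?thesis using A_def by simp
  qed
  have lp: "length (rep p a i j) = length p + 2*j - 2*i" using rep_len[OF l] .
  have "height (rep p a i j) = 0" using E pp pr unfolding M_def by simp
  moreover have "length (rep p a i j) \<ge> 2" using lp l j by auto
  moreover have "\<forall>k. 0 < k \<and> k < length (rep p a i j) \<longrightarrow> height (take k (rep p a i j)) > 0"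
  proof (intro allI impI)
    fix k assume k: "0 < k \<and> k < length (rep p a i j)"
    consider "k \<le> a" | "a < k \<and> k < a + 2*j" | "a + 2*j \<le> k" by linarith
    then show "height (take k (rep p a i j)) > 0"
    proof cases
      case 1
      have "take k (rep p a i j) = take k p" using pr pp 1 la by simp
      moreover have "k < length p" using 1 l i by auto
      ultimately show ?thesis using E k by auto
    next
      case 2
      have lM: "length M = 2*j" unfolding M_def by simp
      have "take k (rep p a i j) = A @ take (k - a) M" using pr 2 la lM by (simp add: take_append)
      moreover have "height (take (k - a) M) > 0" unfolding M_def using height_MM 2 by auto
      ultimately show ?thesis using hA by simp
    next
      case 3
      have lM: "length M = 2*j" unfolding M_def by simp
      have "take k (rep p a i j) = A @ M @ take (k - a - 2*j) B" using pr 3 la lM by (simp add: take_append)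
      moreover have "take (k - a - 2*j + a + 2*i) p = A @ (replicate i True @ replicate i False) @ take (k - a - 2*j) B"
        using pp la by (simp add: take_append)
      moreover have "0 < k - a - 2*j + a + 2*i \<and> k - a - 2*j + a + 2*i < length p" using 3 k lp i by auto
      hence "height (take (k - a - 2*j + a + 2*i) p) > 0" using E by blast
      moreover have "height M = 0" unfolding M_def by simp
      ultimately show ?thesis by simp
    qed
  qed
  ultimately show ?thesis unfolding elevated_iff by auto
qed

lemma rep_Dn:
  assumes p: "p \<in> Dn n" and ta: "(a,i) \<in> towers p" and j: "j \<ge> 1"
  shows "rep p a i j \<in> Dn (n + int j - int i)"
proof -
  have l: "a + 2*i \<le> length p" using towersD[OF ta] by auto
  have "n \<ge> 0" "length p = 2 * nat n + 2" "elevated p" using p unfolding Dn_def by auto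
  moreover have "length (rep p a i j) = length p + 2*j - 2*i" using rep_len[OF l] .
  ultimately show ?thesis using rep_elev[OF _ ta j] l j unfolding Dn_def by auto
qed



lemma towers_finite: "finite (towers q)"
proof -
  have "towers q \<subseteq> {..length q} \<times> {..length q}" using towersD by fastforce
  thus ?thesis by (rule finite_subset) auto
qed

lemma tower_start_unique: "t \<in> towers p \<Longrightarrow> t' \<in> towers p \<Longrightarrow> fst t = fst t' \<Longrightarrow> t = t'"
  using occ_unique unfolding towers_def by (cases t, cases t') auto

lemma some_pick: "t0 \<in> X \<Longrightarrow> (\<And>t. t \<in> X \<Longrightarrow> fst t = fst t0 \<Longrightarrow> t = t0) \<Longrightarrow> (SOME t. t \<in> X \<and> fst t = fst t0) = t0"
  by (rule some_equality) auto

lemma sig_mono: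
  assumes "j \<ge> 1" "i \<ge> 1" "x \<le> a \<or> a + 2*i \<le> x" "y \<le> a \<or> a + 2*i \<le> y" "x < y"
  shows "sig a i j x < sig a i j y"
  using assms unfolding sig_def by auto

lemma colored2_iff: "t \<in> colored2 q \<longleftrightarrow> t \<in> colored q \<and> snd t \<ge> 2"
  unfolding colored2_def by (cases t) auto

context
  fixes p :: path and a i j :: nat
  assumes ta: "(a,i) \<in> towers p" and j: "j \<ge> 1"
begin

lemma hh_order: "t \<in> towers p \<Longrightarrow> q \<in> towers p \<Longrightarrow> fst q < fst t \<Longrightarrow> fst (hh a i j q) < fst (hh a i j t)"
  using sig_mono[OF j _ tower_pos2(1)[OF ta] tower_pos2(1)[OF ta]] towersD(1)[OF ta] unfolding hh_def by auto

lemma hh_snd: "fst t \<noteq> a \<Longrightarrow> snd (hh a i j t) = snd t"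
  unfolding hh_def by auto

lemma hh_fst_le: "fst t \<le> a \<Longrightarrow> fst (hh a i j t) = fst t"
  unfolding hh_def sig_def by auto

lemma hh_fst_gt: "t \<in> towers p \<Longrightarrow> fst t > a \<Longrightarrow> fst (hh a i j t) > a"
  using tower_pos2(1)[OF ta, of t] j unfolding hh_def sig_def by auto

lemma hh_card: "X \<subseteq> towers p \<Longrightarrow> card (hh a i j ` X) = card X"
  using card_image hh_inj[OF ta j] inj_on_subset by blast

lemma hh_int: "X \<subseteq> towers p \<Longrightarrow> Z \<subseteq> towers p \<Longrightarrow> hh a i j ` X \<inter> hh a i j ` Z = hh a i j ` (X \<inter> Z)"
  using hh_inj[OF ta j] by (simp add: inj_on_image_Int)

lemma hh_c2: "t \<in> towers p \<Longrightarrow> fst t \<noteq> a \<Longrightarrow> hh a i j t \<in> colored2 (rep p a i j) \<longleftrightarrow> t \<in> colored2 p"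
  using hh_col[OF ta j, of t] hh_snd[of t] unfolding colored2_iff by auto

lemma hh_back: "X \<subseteq> towers p \<Longrightarrow> hh a j i ` hh a i j ` X = X"
proof -
  assume X: "X \<subseteq> towers p"
  have "\<And>t. t \<in> X \<Longrightarrow> hh a j i (hh a i j t) = t" using hh_inv[OF ta _ j] X by auto
  thus ?thesis by (simp add: image_image cong: image_cong)
qed

end

definition Y :: "int \<Rightarrow> nat \<Rightarrow> nat \<Rightarrow> nat \<Rightarrow> (path \<times> (nat\<times>nat) set \<times> (nat\<times>nat) set \<times> (nat\<times>nat) set) set" where
  "Y n m r k = {(p,S,R,Q). p \<in> Dn n \<and> S \<subseteq> colored p \<and> card S = m \<and> Q \<subseteq> S \<and> card Q = k \<and>
     R \<subseteq> S \<inter> colored2 p \<and> R \<inter> Q = {} \<and> card R = r \<and> (\<forall>t\<in>R. \<forall>q\<in>Q. fst q < fst t)}"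

definition Phi where
  "Phi x = (case x of (p,S,R,Q) \<Rightarrow>
     (let a = Min (fst ` R); i = snd (SOME t. t \<in> R \<and> fst t = a); h = hh a i (i - 1) in
      (rep p a i (i - 1), h ` S, h ` (R - {(a,i)}), h ` insert (a,i) Q)))"

definition Psi where
  "Psi x = (case x of (p,S,R,Q) \<Rightarrow>
     (let a = Max (fst ` Q); j = snd (SOME t. t \<in> Q \<and> fst t = a); h = hh a j (j + 1) in
      (rep p a j (j + 1), h ` S, h ` insert (a,j) R, h ` (Q - {(a,j)}))))"

lemma PsiE: "Max (fst ` Q) = a \<Longrightarrow> snd (SOME t. t \<in> Q \<and> fst t = a) = j \<Longrightarrow>
  Psi (p,S,R,Q) = (rep p a j (j+1), hh a j (j+1) ` S, hh a j (j+1) ` insert (a,j) R, hh a j (j+1) ` (Q - {(a,j)}))"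
  by (simp add: Psi_def Let_def)

lemma PhiE: "Min (fst ` R) = a \<Longrightarrow> snd (SOME t. t \<in> R \<and> fst t = a) = i \<Longrightarrow>
  Phi (p,S,R,Q) = (rep p a i (i - 1), hh a i (i - 1) ` S, hh a i (i - 1) ` (R - {(a,i)}), hh a i (i - 1) ` insert (a,i) Q)"
  by (simp add: Phi_def Let_def)

lemma Phi_step:
  assumes x: "(p,S,R,Q) \<in> Y n m (Suc r) k"
  shows "Phi (p,S,R,Q) \<in> Y (n - 1) m r (Suc k) \<and> Psi (Phi (p,S,R,Q)) = (p,S,R,Q)"
proof -
  have pD: "p \<in> Dn n" and Sc: "S \<subseteq> colored p" and cS: "card S = m" and QS: "Q \<subseteq> S"
    and cQ: "card Q = k" and RS: "R \<subseteq> S \<inter> colored2 p" and RQ: "R \<inter> Q = {}" and cR: "card R = Suc r"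
    and ord: "\<forall>t\<in>R. \<forall>q\<in>Q. fst q < fst t" using x unfolding Y_def by auto
  have ST: "S \<subseteq> towers p" using Sc colored_sub by blast
  have RT: "R \<subseteq> towers p" and QT: "Q \<subseteq> towers p" using ST RS QS by auto
  have fR: "finite R" and fQ: "finite Q" using RT QT towers_finite finite_subset by blast+
  have Rne: "R \<noteq> {}" using cR by auto
  define a where "a = Min (fst ` R)"
  have "a \<in> fst ` R" unfolding a_def using fR Rne by auto
  then obtain i where t0R: "(a,i) \<in> R" by force
  have uniq: "\<And>t. t \<in> R \<Longrightarrow> fst t = a \<Longrightarrow> t = (a,i)"
  proof -
    fix t assume "t \<in> R" "fst t = a"
    thus "t = (a,i)" using tower_start_unique[of t p "(a,i)"] RT t0R by auto
  qed
  have amin: "\<And>t. t \<in> R \<Longrightarrow> a \<le> fst t" unfolding a_def using fR by auto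
  have "(SOME t. t \<in> R \<and> fst t = fst (a,i)) = (a,i)" by (rule some_pick[OF t0R], rule uniq, auto)
  hence sel: "snd (SOME t. t \<in> R \<and> fst t = a) = i" by simp
  have i2: "i \<ge> 2" using t0R RS colored2_iff by auto
  define j where "j = i - 1"
  have j: "j \<ge> 1" and ij: "i = j + 1" using i2 j_def by auto
  have ta: "(a,i) \<in> towers p" using t0R RT by auto
  define h where "h = hh a i j"
  define p' where "p' = rep p a i j"
  have PhiE: "Phi (p,S,R,Q) = (p', h ` S, h ` (R - {(a,i)}), h ` insert (a,i) Q)"
  proof -
    have aM: "Min (fst ` R) = a" using a_def by simp
    show ?thesis unfolding p'_def h_def j_def by (simp add: Phi_def Let_def aM sel)
  qed
  have t0Q: "(a,i) \<notin> Q" using RQ t0R by auto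
  have p'D: "p' \<in> Dn (n - 1)" using rep_Dn[OF pD ta j] ij unfolding p'_def by simp
  have col: "colored p' = h ` colored p" unfolding p'_def h_def using rep_colored[OF ta j] .
  have I1: "h ` S \<subseteq> colored p'" using col Sc by auto
  have I2: "card (h ` S) = m" using hh_card[OF ta j ST] cS h_def by simp
  have I3: "h ` insert (a,i) Q \<subseteq> h ` S" using QS t0R RS by auto
  have I4: "card (h ` insert (a,i) Q) = Suc k" using hh_card[OF ta j, of "insert (a,i) Q"] QT ta t0Q fQ cQ h_def by simp
  have I5: "h ` (R - {(a,i)}) \<subseteq> h ` S \<inter> colored2 p'"
  proof
    fix u assume "u \<in> h ` (R - {(a,i)})"
    then obtain t where t: "t \<in> R" "t \<noteq> (a,i)" "u = h t" by auto
    have "fst t \<noteq> a" using uniq t by blast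
    hence "h t \<in> colored2 p'" using hh_c2[OF ta j, of t] t RS RT unfolding h_def p'_def by auto
    thus "u \<in> h ` S \<inter> colored2 p'" using t RS by auto
  qed
  have I6: "h ` (R - {(a,i)}) \<inter> h ` insert (a,i) Q = {}"
    using hh_int[OF ta j, of "R - {(a,i)}" "insert (a,i) Q"] RT QT ta RQ unfolding h_def by auto
  have "R - {(a,i)} \<subseteq> towers p" using RT by auto
  hence I7: "card (h ` (R - {(a,i)})) = r" using hh_card[OF ta j, of "R - {(a,i)}"] cR t0R fR h_def by simp
  have I8: "\<forall>u\<in>h ` (R - {(a,i)}). \<forall>v\<in>h ` insert (a,i) Q. fst v < fst u"
  proof (intro ballI)
    fix u v assume "u \<in> h ` (R - {(a,i)})" "v \<in> h ` insert (a,i) Q"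
    then obtain t q where t: "t \<in> R" "t \<noteq> (a,i)" "u = h t" and q: "q \<in> insert (a,i) Q" "v = h q" by auto
    have "fst t \<noteq> a" using uniq t by blast
    hence "fst t > a" using amin[OF t(1)] by simp
    hence lt: "fst q < fst t" using q ord t by auto
    have tq: "t \<in> towers p" "q \<in> towers p" using t q RT QT ta by auto
    show "fst v < fst u" using hh_order[OF ta j tq lt] t q unfolding h_def by simp
  qed
  have mem: "Phi (p,S,R,Q) \<in> Y (n - 1) m r (Suc k)"
    unfolding PhiE Y_def using p'D I1 I2 I3 I4 I5 I6 I7 I8 by auto
  have ht0: "h (a,i) = (a,j)" unfolding h_def hh_def sig_def by simp
  have fstQ: "\<And>q. q \<in> insert (a,i) Q \<Longrightarrow> fst q \<le> a"
  proof -
    fix q assume "q \<in> insert (a,i) Q"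
    thus "fst q \<le> a"
    proof
      assume "q \<in> Q"
      hence "fst q < fst (a,i)" using ord t0R by blast
      thus ?thesis by simp
    qed simp
  qed
  have hfst: "\<And>q. q \<in> insert (a,i) Q \<Longrightarrow> fst (h q) = fst q" using hh_fst_le[OF ta j] fstQ unfolding h_def by simp
  have fin': "finite (h ` insert (a,i) Q)" using fQ by simp
  have mx: "Max (fst ` h ` insert (a,i) Q) = a"
  proof (rule Max_eqI)
    show "finite (fst ` h ` insert (a,i) Q)" using fin' by simp
    fix y assume "y \<in> fst ` h ` insert (a,i) Q"
    then obtain q where q: "q \<in> insert (a,i) Q" "y = fst (h q)" by blast
    thus "y \<le> a" using hfst[OF q(1)] fstQ[OF q(1)] by simp
  next
    have "h (a,i) \<in> h ` insert (a,i) Q" by simp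
    thus "a \<in> fst ` h ` insert (a,i) Q" unfolding ht0 by (metis fst_conv image_eqI)
  qed
  have T': "towers p' = h ` towers p" unfolding p'_def h_def using rep_towers(1)[OF ta j] .
  have Q'T: "h ` insert (a,i) Q \<subseteq> towers p'" using T' QT ta by auto
  have ajT: "(a,j) \<in> towers p'" using rep_towers(2)[OF ta j] p'_def by simp
  have sel2: "snd (SOME t. t \<in> h ` insert (a,i) Q \<and> fst t = a) = j"
  proof -
    have m: "(a,j) \<in> h ` insert (a,i) Q" using ht0 by (metis image_insert insertI1)
    have "(SOME t. t \<in> h ` insert (a,i) Q \<and> fst t = fst (a,j)) = (a,j)"
    proof (rule some_pick[OF m])
      fix t assume "t \<in> h ` insert (a,i) Q" "fst t = fst (a,j)"
      thus "t = (a,j)" using tower_start_unique[of t p' "(a,j)"] Q'T ajT by blast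
    qed
    thus ?thesis by simp
  qed
  have rr: "rep p' a j (j + 1) = p" using rep_towers(3)[OF ta j] ij p'_def by simp
  have hb: "\<And>X. X \<subseteq> towers p \<Longrightarrow> hh a j (j+1) ` h ` X = X" using hh_back[OF ta j] ij h_def by simp
  have e1: "insert (a,j) (h ` (R - {(a,i)})) = h ` R"
  proof -
    have "insert (a,i) (R - {(a,i)}) = R" using t0R by auto
    hence "h ` insert (a,i) (R - {(a,i)}) = h ` R" by simp
    thus ?thesis by (simp only: image_insert ht0)
  qed
  have inj: "inj_on h (towers p)" using hh_inj[OF ta j] h_def by simp
  have e2: "h ` insert (a,i) Q - {(a,j)} = h ` Q"
  proof -
    have "h (a,i) \<notin> h ` Q" using inj t0Q ta QT by (meson inj_on_image_mem_iff)
    thus ?thesis using ht0 by auto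
  qed
  have "Psi (Phi (p,S,R,Q)) = (rep p' a j (j+1), hh a j (j+1) ` h ` S, hh a j (j+1) ` insert (a,j) (h ` (R - {(a,i)})),
      hh a j (j+1) ` (h ` insert (a,i) Q - {(a,j)}))"
    unfolding PhiE by (rule PsiE[OF mx sel2])
  also have "\<dots> = (p,S,R,Q)" by (simp only: e1 e2 rr hb[OF ST] hb[OF RT] hb[OF QT])
  finally have "Psi (Phi (p,S,R,Q)) = (p,S,R,Q)" .
  with mem show ?thesis by simp
qed

lemma Psi_step:
  assumes x: "(p,S,R,Q) \<in> Y (n - 1) m r (Suc k)"
  shows "Psi (p,S,R,Q) \<in> Y n m (Suc r) k \<and> Phi (Psi (p,S,R,Q)) = (p,S,R,Q)"
proof -
  have pD: "p \<in> Dn (n - 1)" and Sc: "S \<subseteq> colored p" and cS: "card S = m" and QS: "Q \<subseteq> S"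
    and cQ: "card Q = Suc k" and RS: "R \<subseteq> S \<inter> colored2 p" and RQ: "R \<inter> Q = {}" and cR: "card R = r"
    and ord: "\<forall>t\<in>R. \<forall>q\<in>Q. fst q < fst t" using x unfolding Y_def by auto
  have ST: "S \<subseteq> towers p" using Sc colored_sub by blast
  have RT: "R \<subseteq> towers p" and QT: "Q \<subseteq> towers p" using ST RS QS by auto
  have fR: "finite R" and fQ: "finite Q" using RT QT towers_finite finite_subset by blast+
  have Qne: "Q \<noteq> {}" using cQ by auto
  define a where "a = Max (fst ` Q)"
  have "a \<in> fst ` Q" unfolding a_def using fQ Qne by auto
  then obtain j where t0Q: "(a,j) \<in> Q" by force
  have uniq: "\<And>t. t \<in> Q \<Longrightarrow> fst t = a \<Longrightarrow> t = (a,j)"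
  proof -
    fix t assume "t \<in> Q" "fst t = a"
    thus "t = (a,j)" using tower_start_unique[of t p "(a,j)"] QT t0Q by auto
  qed
  have amax: "\<And>t. t \<in> Q \<Longrightarrow> fst t \<le> a" unfolding a_def using fQ by auto
  have "(SOME t. t \<in> Q \<and> fst t = fst (a,j)) = (a,j)" by (rule some_pick[OF t0Q], rule uniq, auto)
  hence sel: "snd (SOME t. t \<in> Q \<and> fst t = a) = j" by simp
  have ta: "(a,j) \<in> towers p" using t0Q QT by auto
  have j: "j \<ge> 1" using towersD(1)[OF ta] .
  have j1: "j + 1 \<ge> 1" by simp
  define h where "h = hh a j (j + 1)"
  define p' where "p' = rep p a j (j + 1)"
  have PsiX: "Psi (p,S,R,Q) = (p', h ` S, h ` insert (a,j) R, h ` (Q - {(a,j)}))"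
    unfolding p'_def h_def by (rule PsiE[OF a_def[symmetric] sel])
  have t0R: "(a,j) \<notin> R" using RQ t0Q by auto
  have p'D: "p' \<in> Dn n" using rep_Dn[OF pD ta j1] unfolding p'_def by simp
  have col: "colored p' = h ` colored p" unfolding p'_def h_def using rep_colored[OF ta j1] .
  have I1: "h ` S \<subseteq> colored p'" using col Sc by auto
  have I2: "card (h ` S) = m" using hh_card[OF ta j1 ST] cS h_def by simp
  have I3: "h ` (Q - {(a,j)}) \<subseteq> h ` S" using QS by auto
  have "Q - {(a,j)} \<subseteq> towers p" using QT by auto
  hence I4: "card (h ` (Q - {(a,j)})) = k" using hh_card[OF ta j1, of "Q - {(a,j)}"] cQ t0Q fQ h_def by simp
  have ht0: "h (a,j) = (a,j+1)" unfolding h_def hh_def sig_def by simp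
  have I5: "h ` insert (a,j) R \<subseteq> h ` S \<inter> colored2 p'"
  proof
    fix u assume "u \<in> h ` insert (a,j) R"
    then obtain t where t: "t \<in> insert (a,j) R" "u = h t" by auto
    have tS: "t \<in> S" using t t0Q QS RS by auto
    show "u \<in> h ` S \<inter> colored2 p'"
    proof (cases "t = (a,j)")
      case True
      have "(a,j) \<in> colored p" using t0Q QS Sc by auto
      hence "h (a,j) \<in> colored p'" using col by simp
      hence "u \<in> colored2 p'" using True t ht0 j unfolding colored2_iff by simp
      thus ?thesis using t tS by auto
    next
      case False
      hence tR: "t \<in> R" using t by auto
      have "fst t \<noteq> a"
      proof
        assume "fst t = a"
        hence "t = (a,j)" using tower_start_unique[of t p "(a,j)"] RT tR ta by auto
        thus False using False by simp
      qed
      hence "h t \<in> colored2 p'" using hh_c2[OF ta j1, of t] tR RS RT unfolding h_def p'_def by auto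
      thus ?thesis using t tS by auto
    qed
  qed
  have I6: "h ` insert (a,j) R \<inter> h ` (Q - {(a,j)}) = {}"
    using hh_int[OF ta j1, of "insert (a,j) R" "Q - {(a,j)}"] RT QT ta RQ unfolding h_def by auto
  have "insert (a,j) R \<subseteq> towers p" using RT ta by auto
  hence I7: "card (h ` insert (a,j) R) = Suc r" using hh_card[OF ta j1, of "insert (a,j) R"] cR t0R fR h_def by simp
  have I8: "\<forall>u\<in>h ` insert (a,j) R. \<forall>v\<in>h ` (Q - {(a,j)}). fst v < fst u"
  proof (intro ballI)
    fix u v assume "u \<in> h ` insert (a,j) R" "v \<in> h ` (Q - {(a,j)})"
    then obtain t q where t: "t \<in> insert (a,j) R" "u = h t" and q: "q \<in> Q" "q \<noteq> (a,j)" "v = h q" by auto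
    have "fst q \<noteq> a" using uniq q by blast
    hence qa: "fst q < a" using amax[OF q(1)] by simp
    have lt: "fst q < fst t"
    proof (cases "t = (a,j)")
      case True thus ?thesis using qa by simp
    next
      case False thus ?thesis using t q ord by auto
    qed
    have tq: "t \<in> towers p" "q \<in> towers p" using t q RT QT ta by auto
    show "fst v < fst u" using hh_order[OF ta j1 tq lt] t q unfolding h_def by simp
  qed
  have mem: "Psi (p,S,R,Q) \<in> Y n m (Suc r) k"
    unfolding PsiX Y_def using p'D I1 I2 I3 I4 I5 I6 I7 I8 by auto
  have fstR: "\<And>t. t \<in> R \<Longrightarrow> a < fst t" using ord t0Q by fastforce
  have hfst: "\<And>t. t \<in> R \<Longrightarrow> a < fst (h t)" using hh_fst_gt[OF ta j1] fstR RT unfolding h_def by blast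
  have fin': "finite (h ` insert (a,j) R)" using fR by simp
  have mn: "Min (fst ` h ` insert (a,j) R) = a"
  proof (rule Min_eqI)
    show "finite (fst ` h ` insert (a,j) R)" using fin' by simp
    fix y assume "y \<in> fst ` h ` insert (a,j) R"
    then obtain t where t: "t \<in> insert (a,j) R" "y = fst (h t)" by blast
    thus "a \<le> y"
    proof (cases "t = (a,j)")
      case True thus ?thesis using t ht0 by simp
    next
      case False thus ?thesis using t hfst[of t] by auto
    qed
  next
    have "h (a,j) \<in> h ` insert (a,j) R" by simp
    thus "a \<in> fst ` h ` insert (a,j) R" unfolding ht0 by (metis fst_conv image_eqI)
  qed
  have T': "towers p' = h ` towers p" unfolding p'_def h_def using rep_towers(1)[OF ta j1] .
  have R'T: "h ` insert (a,j) R \<subseteq> towers p'" using T' RT ta by auto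
  have ajT: "(a,j+1) \<in> towers p'" using rep_towers(2)[OF ta j1] p'_def by simp
  have sel2: "snd (SOME t. t \<in> h ` insert (a,j) R \<and> fst t = a) = j + 1"
  proof -
    have m: "(a,j+1) \<in> h ` insert (a,j) R" using ht0 by (metis image_insert insertI1)
    have "(SOME t. t \<in> h ` insert (a,j) R \<and> fst t = fst (a,j+1)) = (a,j+1)"
    proof (rule some_pick[OF m])
      fix t assume "t \<in> h ` insert (a,j) R" "fst t = fst (a,j+1)"
      thus "t = (a,j+1)" using tower_start_unique[of t p' "(a,j+1)"] R'T ajT by blast
    qed
    thus ?thesis by simp
  qed
  have rr: "rep p' a (j + 1) (j + 1 - 1) = p" using rep_towers(3)[OF ta j1] p'_def by simp
  have hb: "\<And>X. X \<subseteq> towers p \<Longrightarrow> hh a (j+1) (j + 1 - 1) ` h ` X = X" using hh_back[OF ta j1] h_def by simp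
  have e1: "insert (a,j+1) (h ` (Q - {(a,j)})) = h ` Q"
  proof -
    have "insert (a,j) (Q - {(a,j)}) = Q" using t0Q by auto
    hence "h ` insert (a,j) (Q - {(a,j)}) = h ` Q" by simp
    thus ?thesis by (simp only: image_insert ht0)
  qed
  have inj: "inj_on h (towers p)" using hh_inj[OF ta j1] h_def by simp
  have e2: "h ` insert (a,j) R - {(a,j+1)} = h ` R"
  proof -
    have "h (a,j) \<notin> h ` R" using inj t0R ta RT by (meson inj_on_image_mem_iff)
    thus ?thesis using ht0 by auto
  qed
  have "Phi (Psi (p,S,R,Q)) = (rep p' a (j+1) (j + 1 - 1), hh a (j+1) (j + 1 - 1) ` h ` S,
      hh a (j+1) (j + 1 - 1) ` (h ` insert (a,j) R - {(a,j+1)}),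
      hh a (j+1) (j + 1 - 1) ` insert (a,j+1) (h ` (Q - {(a,j)})))"
    unfolding PsiX by (rule PhiE[OF mn sel2])
  also have "\<dots> = (p,S,R,Q)" by (simp only: e1 e2 rr hb[OF ST] hb[OF RT] hb[OF QT])
  finally have "Phi (Psi (p,S,R,Q)) = (p,S,R,Q)" .
  with mem show ?thesis by simp
qed

lemma Y_step: "bij_betw Phi (Y n m (Suc r) k) (Y (n - 1) m r (Suc k))"
proof (rule bij_betw_byWitness[where f' = Psi])
  show "\<forall>x\<in>Y n m (Suc r) k. Psi (Phi x) = x"
  proof
    fix x assume x: "x \<in> Y n m (Suc r) k"
    obtain p S R Q where e: "x = (p,S,R,Q)" by (cases x) auto
    show "Psi (Phi x) = x" using Phi_step[of p S R Q n m r k] x unfolding e by blast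
  qed
  show "\<forall>y\<in>Y (n - 1) m r (Suc k). Phi (Psi y) = y"
  proof
    fix x assume x: "x \<in> Y (n - 1) m r (Suc k)"
    obtain p S R Q where e: "x = (p,S,R,Q)" by (cases x) auto
    show "Phi (Psi x) = x" using Psi_step[of p S R Q n m r k] x unfolding e by blast
  qed
  show "Phi ` Y n m (Suc r) k \<subseteq> Y (n - 1) m r (Suc k)"
  proof
    fix z assume "z \<in> Phi ` Y n m (Suc r) k"
    then obtain x where x: "x \<in> Y n m (Suc r) k" "z = Phi x" by blast
    obtain p S R Q where e: "x = (p,S,R,Q)" by (cases x) auto
    show "z \<in> Y (n - 1) m r (Suc k)" using Phi_step[of p S R Q n m r k] x unfolding e by blast
  qed
  show "Psi ` Y (n - 1) m r (Suc k) \<subseteq> Y n m (Suc r) k"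
  proof
    fix z assume "z \<in> Psi ` Y (n - 1) m r (Suc k)"
    then obtain x where x: "x \<in> Y (n - 1) m r (Suc k)" "z = Psi x" by blast
    obtain p S R Q where e: "x = (p,S,R,Q)" by (cases x) auto
    show "z \<in> Y n m (Suc r) k" using Psi_step[of p S R Q n m r k] x unfolding e by blast
  qed
qed
lemma Y_chain: "\<forall>n k. \<exists>f. bij_betw f (Y n m r k) (Y (n - int r) m 0 (k + r))"
proof (induction r)
  case 0
  show ?case
  proof (intro allI)
    fix n k
    show "\<exists>f. bij_betw f (Y n m 0 k) (Y (n - int 0) m 0 (k + 0))" using bij_betw_id[of "Y n m 0 k"] by auto
  qed
next
  case (Suc r)
  show ?case
  proof (intro allI)
    fix n k
    obtain g where g: "bij_betw g (Y (n - 1) m r (Suc k)) (Y (n - 1 - int r) m 0 (Suc k + r))" using Suc by blast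
    have "bij_betw (g \<circ> Phi) (Y n m (Suc r) k) (Y (n - 1 - int r) m 0 (Suc k + r))"
      using bij_betw_trans[OF Y_step g] .
    moreover have "n - 1 - int r = n - int (Suc r)" "Suc k + r = k + Suc r" by auto
    ultimately show "\<exists>f. bij_betw f (Y n m (Suc r) k) (Y (n - int (Suc r)) m 0 (k + Suc r))" by metis
  qed
qed

lemma fin_colored: "S \<subseteq> colored p \<Longrightarrow> finite S"
  by (rule finite_subset[OF subset_trans[OF _ colored_sub] towers_finite])

lemma Y_mem: "(p,S,R,Q) \<in> Y n m r k \<longleftrightarrow> p \<in> Dn n \<and> S \<subseteq> colored p \<and> card S = m \<and> Q \<subseteq> S \<and> card Q = k \<and>
     R \<subseteq> S \<inter> colored2 p \<and> R \<inter> Q = {} \<and> card R = r \<and> (\<forall>t\<in>R. \<forall>q\<in>Q. fst q < fst t)"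
  unfolding Y_def by (simp only: mem_Collect_eq prod.case)
lemma Bw_mem0: "(p,S,R) \<in> TsBw m r n \<longleftrightarrow> p \<in> Dn n \<and> S \<subseteq> colored p \<and> card S = m \<and>
      R \<subseteq> S \<inter> colored2 p \<and> card R = r"
  unfolding TsBw_def by (simp only: mem_Collect_eq prod.case)
lemma Tw_mem0: "(p,S,R) \<in> TsTw m r n \<longleftrightarrow> p \<in> Dn n \<and> S \<subseteq> colored p \<and> card S = m \<and>
      R \<subseteq> S \<and> card R = r"
  unfolding TsTw_def by (simp only: mem_Collect_eq prod.case)
lemma Bw_mem: "(p,S,R) \<in> TsBw m r n \<longleftrightarrow> (p,S,R,{}) \<in> Y n m r 0"
  unfolding Bw_mem0 Y_mem by simp

lemma Y_Q0: "(p,S,R,Q) \<in> Y n m r 0 \<Longrightarrow> Q = {}"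
proof -
  assume "(p,S,R,Q) \<in> Y n m r 0"
  hence "S \<subseteq> colored p" "Q \<subseteq> S" "card Q = 0" unfolding Y_mem by auto
  moreover have "finite Q" using finite_subset[OF \<open>Q \<subseteq> S\<close> fin_colored[OF \<open>S \<subseteq> colored p\<close>]] .
  ultimately show "Q = {}" by simp
qed

lemma Tw_mem: "(p,S,Q) \<in> TsTw m k n \<longleftrightarrow> (p,S,{},Q) \<in> Y n m 0 k"
  unfolding Tw_mem0 Y_mem by simp

lemma Y_R0: "(p,S,R,Q) \<in> Y n m 0 k \<Longrightarrow> R = {}"
proof -
  assume "(p,S,R,Q) \<in> Y n m 0 k"
  hence "S \<subseteq> colored p" "R \<subseteq> S" "card R = 0" unfolding Y_mem by auto
  moreover have "finite R" using finite_subset[OF \<open>R \<subseteq> S\<close> fin_colored[OF \<open>S \<subseteq> colored p\<close>]] .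
  ultimately show "R = {}" by simp
qed

definition addQ :: "path \<times> (nat\<times>nat) set \<times> (nat\<times>nat) set \<Rightarrow> path \<times> (nat\<times>nat) set \<times> (nat\<times>nat) set \<times> (nat\<times>nat) set" where
  "addQ x = (fst x, fst (snd x), snd (snd x), {})"
definition dropQ :: "path \<times> (nat\<times>nat) set \<times> (nat\<times>nat) set \<times> (nat\<times>nat) set \<Rightarrow> path \<times> (nat\<times>nat) set \<times> (nat\<times>nat) set" where
  "dropQ x = (fst x, fst (snd x), fst (snd (snd x)))"
definition addR :: "path \<times> (nat\<times>nat) set \<times> (nat\<times>nat) set \<Rightarrow> path \<times> (nat\<times>nat) set \<times> (nat\<times>nat) set \<times> (nat\<times>nat) set" where
  "addR x = (fst x, fst (snd x), {}, snd (snd x))"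
definition dropR :: "path \<times> (nat\<times>nat) set \<times> (nat\<times>nat) set \<times> (nat\<times>nat) set \<Rightarrow> path \<times> (nat\<times>nat) set \<times> (nat\<times>nat) set" where
  "dropR x = (fst x, fst (snd x), snd (snd (snd x)))"

lemma Bw_Y: "bij_betw addQ (TsBw m r n) (Y n m r 0)"
proof (rule bij_betw_byWitness[where f' = dropQ])
  show "\<forall>x\<in>TsBw m r n. dropQ (addQ x) = x" unfolding addQ_def dropQ_def by simp
  show "\<forall>y\<in>Y n m r 0. addQ (dropQ y) = y"
  proof
    fix y assume y: "y \<in> Y n m r 0"
    obtain p S R Q where e: "y = (p,S,R,Q)" by (cases y) auto
    have "Q = {}" using Y_Q0 y e by blast
    thus "addQ (dropQ y) = y" unfolding e addQ_def dropQ_def by simp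
  qed
  show "addQ ` TsBw m r n \<subseteq> Y n m r 0"
  proof
    fix z assume "z \<in> addQ ` TsBw m r n"
    then obtain x where x: "x \<in> TsBw m r n" "z = addQ x" by blast
    obtain p S R where e: "x = (p,S,R)" by (cases x) auto
    show "z \<in> Y n m r 0" using Bw_mem[of p S R m r n] x unfolding e addQ_def by simp
  qed
  show "dropQ ` Y n m r 0 \<subseteq> TsBw m r n"
  proof
    fix z assume "z \<in> dropQ ` Y n m r 0"
    then obtain x where x: "x \<in> Y n m r 0" "z = dropQ x" by blast
    obtain p S R Q where e: "x = (p,S,R,Q)" by (cases x) auto
    have "Q = {}" using Y_Q0 x e by blast
    thus "z \<in> TsBw m r n" using Bw_mem[of p S R m r n] x unfolding e dropQ_def by simp
  qed
qed

lemma Y_Tw: "bij_betw dropR (Y n m 0 k) (TsTw m k n)"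
proof (rule bij_betw_byWitness[where f' = addR])
  show "\<forall>x\<in>TsTw m k n. dropR (addR x) = x" unfolding addR_def dropR_def by simp
  show "\<forall>y\<in>Y n m 0 k. addR (dropR y) = y"
  proof
    fix y assume y: "y \<in> Y n m 0 k"
    obtain p S R Q where e: "y = (p,S,R,Q)" by (cases y) auto
    have "R = {}" using Y_R0 y e by blast
    thus "addR (dropR y) = y" unfolding e addR_def dropR_def by simp
  qed
  show "addR ` TsTw m k n \<subseteq> Y n m 0 k"
  proof
    fix z assume "z \<in> addR ` TsTw m k n"
    then obtain x where x: "x \<in> TsTw m k n" "z = addR x" by blast
    obtain p S Q where e: "x = (p,S,Q)" by (cases x) auto
    show "z \<in> Y n m 0 k" using Tw_mem[of p S Q m k n] x unfolding e addR_def by simp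
  qed
  show "dropR ` Y n m 0 k \<subseteq> TsTw m k n"
  proof
    fix z assume "z \<in> dropR ` Y n m 0 k"
    then obtain x where x: "x \<in> Y n m 0 k" "z = dropR x" by blast
    obtain p S R Q where e: "x = (p,S,R,Q)" by (cases x) auto
    have "R = {}" using Y_R0 x e by blast
    thus "z \<in> TsTw m k n" using Tw_mem[of p S Q m k n] x unfolding e dropR_def by simp
  qed
qed

theorem lemma2p2:
  fixes n m r :: nat
  shows "\<exists>f. bij_betw f (TsBw m r (int n)) (TsTw m r (int n - int r))"
proof -
  obtain g where g: "bij_betw g (Y (int n) m r 0) (Y (int n - int r) m 0 (0 + r))" using Y_chain by blast
  have "bij_betw (dropR \<circ> (g \<circ> addQ)) (TsBw m r (int n)) (TsTw m r (int n - int r))"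
    using bij_betw_trans[OF bij_betw_trans[OF Bw_Y g] Y_Tw] by simp
  thus ?thesis by blast
qed


end
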